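(* Suppose the matrix $A$ is diagonalisable with $2N$ distinct eigenvalues $\lambda_k^{(l)}$, $k=0,\dots,N-1$, $l=1,2$, and suppose $\gamma>0$ and $\gamma/2+\beta+T\alpha>1/T$. Then $\mathrm{Re}(\lambda_k^{(l)})\le0$ for all $k=0,\dots,N-1$ and $l=1,2$.
   Context: Parameters: $N>2$, $\alpha\ge0$, $\beta\ge0$, $\gamma>0$, $T>0$. $A\in\mathbb R^{2N\times 2N}$ is the drift matrix of the linear system in coordinates $(x_1,y_1,\dots,x_N,y_N)$ given, with cyclic indices ($x_{N+1}=x_1$, $y_{N+1}=y_1$, $x_0=x_N$), by $\dot x_n=y_n$, $\dot y_n=\gamma\big(\tfrac1T(x_{n+1}-x_n)-y_n\big)+\beta(y_{n+1}-y_n)+\alpha(x_{n+1}-2x_n+x_{n-1})$. *)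

theory Defs
  imports Complex_Main "Jordan_Normal_Form.Matrix" "Jordan_Normal_Form.Char_Poly"
begin

text \<open>Drift matrix A in coordinates (x_1,y_1,...,x_N,y_N), 0-indexed:
  x_{n+1} sits at index 2n, y_{n+1} at index 2n+1 (n = 0..N-1), cyclic indices mod N.
  Row of x_n: dx_n/dt = y_n.
  Row of y_n: gamma((x_{n+1}-x_n)/T - y_n) + beta(y_{n+1}-y_n) + alpha(x_{n+1}-2x_n+x_{n-1}).\<close>

definition drift_matrix :: "nat \<Rightarrow> real \<Rightarrow> real \<Rightarrow> real \<Rightarrow> real \<Rightarrow> real mat" where
  "drift_matrix N \<alpha> \<beta> \<gamma> T = mat (2*N) (2*N) (\<lambda>(i,j).
     let n = i div 2; m = j div 2; nxt = (n + 1) mod N; prv = (n + N - 1) mod N in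
     if even i then (if j = i + 1 then 1 else 0)
     else if even j then
       (if m = nxt then \<gamma> / T + \<alpha> else 0)
       + (if m = n then - \<gamma> / T - 2 * \<alpha> else 0)
       + (if m = prv then \<alpha> else 0)
     else
       (if m = n then - \<gamma> - \<beta> else 0)
       + (if m = nxt then \<beta> else 0))"

definition diagonalisable :: "complex mat \<Rightarrow> bool" where
  "diagonalisable M = (\<exists>D. diagonal_mat D \<and> similar_mat M D)"

end

theory Submission
  imports Defs "HOL-Analysis.Convex"
begin

lemma real_core:
  fixes u v e b g K p q :: real
  assumes g: "g > 0" and K: "K > 0" and p: "p \<ge> 0" and q: "q \<ge> 0"
    and cond: "2*K*(K - q*g) < g\<^sup>2*(K+2*p)"
    and disk: "e\<^sup>2 + b\<^sup>2 \<le> 2*e"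
    and R: "u\<^sup>2 - v\<^sup>2 + g*u + K*e + q*u*e + q*b*v + 2*p*e = 0"
    and I: "v*(2*u+g+q*e) = b*(K+q*u)"
  shows "u \<le> 0"
proof (rule ccontr)
  assume "\<not> u \<le> 0" hence u: "u > 0" by simp
  have b2ge: "b\<^sup>2 \<ge> 0" by simp
  have e2ge: "e\<^sup>2 \<ge> 0" by simp
  have e0: "e \<ge> 0" using disk b2ge e2ge by linarith
  have ee0: "e\<^sup>2 \<le> 2*e" using disk b2ge by linarith
  hence ee: "e*e \<le> 2*e" by (simp add: power2_eq_square)
  have e2: "e \<le> 2"
  proof (rule ccontr)
    assume "\<not> e \<le> 2" hence "e > 2" by simp
    hence "e*e > 2*e" by (simp add: mult_strict_right_mono)
    thus False using ee by simp
  qed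
  define s where "s = 2*u+g+q*e"
  define m where "m = K + q*u"
  define h where "h = K - q*u - q*g - q*q*e"
  define W where "W = u\<^sup>2 + (g+q*e)*u + (K+2*p)*e"
  have s0: "s > 0" using u g q e0 unfolding s_def by (simp add: add_pos_nonneg)
  have m0: "m > 0" using u K q unfolding m_def by (simp add: add_pos_nonneg)
  have vs: "v*s = b*m" using I unfolding s_def m_def .
  have key: "b\<^sup>2 * m * h = s\<^sup>2 * W"
  proof -
    have "s\<^sup>2 * (u\<^sup>2 - v\<^sup>2 + g*u + K*e + q*u*e + q*b*v + 2*p*e) = 0" using R by simp
    hence "s\<^sup>2 * W - (v*s)\<^sup>2 + q*b*(v*s)*s = 0" unfolding W_def
      by (simp add: algebra_simps power2_eq_square)
    hence "s\<^sup>2 * W - (b*m)\<^sup>2 + q*b*(b*m)*s = 0" using vs by simp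
    thus ?thesis unfolding h_def m_def s_def W_def by (simp add: algebra_simps power2_eq_square)
  qed
  have W1: "s\<^sup>2 * W > (g+q*e)\<^sup>2*(K+2*p)*e"
  proof -
    have "s\<^sup>2 \<ge> (g+q*e)\<^sup>2" unfolding s_def using u g q e0
      by (intro power_mono) (auto intro: add_nonneg_nonneg)
    moreover have "W \<ge> u\<^sup>2 + (K+2*p)*e" unfolding W_def using u g q e0 by (simp add: add_nonneg_nonneg)
    moreover have "s\<^sup>2 * u\<^sup>2 > 0" using s0 u by simp
    moreover have "(K+2*p)*e \<ge> 0" using K p e0 by simp
    ultimately have "s\<^sup>2 * W \<ge> s\<^sup>2 * u\<^sup>2 + (g+q*e)\<^sup>2*((K+2*p)*e)"
    proof -
      assume a1: "s\<^sup>2 \<ge> (g+q*e)\<^sup>2" and a2: "W \<ge> u\<^sup>2 + (K+2*p)*e" and a4: "(K+2*p)*e \<ge> 0"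
      have "s\<^sup>2 * W \<ge> s\<^sup>2 * (u\<^sup>2 + (K+2*p)*e)" using a2 by (simp add: mult_left_mono)
      moreover have "s\<^sup>2 * ((K+2*p)*e) \<ge> (g+q*e)\<^sup>2*((K+2*p)*e)" using a1 a4 by (simp add: mult_right_mono)
      ultimately show ?thesis by (simp add: distrib_left)
    qed
    thus ?thesis using \<open>s\<^sup>2 * u\<^sup>2 > 0\<close> by (simp add: mult.assoc)
  qed
  show False
  proof (cases "h \<le> 0")
    case True
    have "b\<^sup>2 * m * h \<le> 0" using True m0 by (simp add: mult_nonneg_nonpos)
    moreover have "(g+q*e)\<^sup>2*(K+2*p)*e \<ge> 0" using K p e0 by simp
    ultimately show False using key W1 by linarith
  next
    case False
    define c0 where "c0 = K - q*g - q*q*e"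
    have mh: "m*h \<le> K*c0"
    proof -
      have "m*h = K*c0 + q*u*(c0 - K) - q*q*u*u" unfolding m_def h_def c0_def by (simp add: algebra_simps)
      moreover have "q*g \<ge> 0" "q*q*e \<ge> 0" using q g e0 by simp_all
      hence "c0 \<le> K" unfolding c0_def by linarith
      ultimately show ?thesis using q u
        by (smt (verit) mult_nonneg_nonneg mult_nonneg_nonpos)
    qed
    have b2: "b\<^sup>2 \<le> e*(2-e)" using disk by (simp add: algebra_simps power2_eq_square)
    have "b\<^sup>2 * (m*h) \<le> (e*(2-e))*(m*h)" using b2 False m0 by (simp add: mult_right_mono)
    also have "\<dots> \<le> (e*(2-e))*(K*c0)" using mh e0 e2 by (simp add: mult_left_mono)
    also have "\<dots> \<le> (g+q*e)\<^sup>2*(K+2*p)*e"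
    proof -
      have f: "(2-e)*K*c0 \<le> (g+q*e)\<^sup>2*(K+2*p)"
      proof -
        have "(2-e)*K*c0 \<le> (2-e)*K*(K-q*g)"
        proof -
          have "(2-e)*K*c0 = (2-e)*K*(K-q*g) - (2-e)*K*(q*q*e)" unfolding c0_def by (simp add: algebra_simps)
          moreover have "(2-e)*K*(q*q*e) \<ge> 0" using e0 e2 K q by simp
          ultimately show ?thesis by linarith
        qed
        also have "\<dots> \<le> g\<^sup>2*(K+2*p)"
        proof (cases "K - q*g \<le> 0")
          case True
          hence "(2-e)*K*(K-q*g) \<le> 0" using e2 K by (simp add: mult_nonneg_nonpos)
          moreover have "g\<^sup>2*(K+2*p) \<ge> 0" using K p by simp
          ultimately show ?thesis by linarith
        next
          case False
          hence "(2-e)*K*(K-q*g) \<le> 2*K*(K-q*g)" using e0 K by (simp add: mult_right_mono)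
          thus ?thesis using cond by linarith
        qed
        also have "\<dots> \<le> (g+q*e)\<^sup>2*(K+2*p)" using g q e0 K p
          by (intro mult_right_mono power_mono) auto
        finally show ?thesis .
      qed
      have "(e*(2-e))*(K*c0) = e*((2-e)*K*c0)" by (simp add: algebra_simps)
      also have "\<dots> \<le> e*((g+q*e)\<^sup>2*(K+2*p))" using f e0 by (simp add: mult_left_mono)
      finally show ?thesis by (simp add: algebra_simps)
    qed
    finally have "b\<^sup>2 * (m*h) \<le> (g+q*e)\<^sup>2*(K+2*p)*e" .
    thus False using key W1 by (simp add: mult.assoc)
  qed
qed


lemma sum_even_odd:
  fixes f :: "nat \<Rightarrow> 'a::comm_monoid_add"
  shows "(\<Sum>j\<in>{0..<2*N}. f j) = (\<Sum>m<N. f (2*m) + f (2*m+1))"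
proof (induction N)
  case 0 then show ?case by simp
next
  case (Suc N)
  have "{0..<2*Suc N} = insert (2*N+1) (insert (2*N) {0..<2*N})" by auto
  hence "(\<Sum>j\<in>{0..<2*Suc N}. f j) = f (2*N+1) + (f (2*N) + (\<Sum>j\<in>{0..<2*N}. f j))" by simp
  then show ?case using Suc by (simp add: ac_simps)
qed

lemma nxt_char: "n < N \<Longrightarrow> (n+1) mod N = (if n+1 < N then n+1 else 0)" for n N :: nat
proof (cases "n+1 < N")
  case True thus ?thesis by (simp add: mod_less)
next
  case False assume "n < N"
  hence "n+1 = N" using False by simp
  thus ?thesis by simp
qed

lemma prv_char: "n < N \<Longrightarrow> (n+N-1) mod N = (if n = 0 then N-1 else n-1)" for n N :: nat
proof (cases "n = 0")
  case True assume "n < N"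
  hence "N - 1 < N" by simp
  thus ?thesis using True by (simp add: mod_less)
next
  case False assume "n < N"
  hence "n+N-1 = (n-1) + N" using False by simp
  hence "(n+N-1) mod N = (n-1) mod N" by simp
  thus ?thesis using False \<open>n<N\<close> by (simp add: mod_less)
qed

lemma prv_nxt: "n < N \<Longrightarrow> ((n+1) mod N + N - 1) mod N = n" for n N :: nat
proof -
  assume n: "n < N"
  have lt: "(n+1) mod N < N" using n by (intro mod_less_divisor) simp
  show ?thesis using n by (simp only: prv_char[OF lt] nxt_char[OF n]) auto
qed

lemma nxt_prv: "n < N \<Longrightarrow> ((n+N-1) mod N + 1) mod N = n" for n N :: nat
proof -
  assume n: "n < N"
  have lt: "(n+N-1) mod N < N" using n by (intro mod_less_divisor) simp
  show ?thesis using n by (simp only: prv_char[OF n] nxt_char[OF lt]) auto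
qed

lemma sum_shift:
  fixes N :: nat
  assumes "0 < N"
  shows "(\<Sum>n<N. g ((n+1) mod N)) = (\<Sum>n<N. g n)"
proof -
  have "bij_betw (\<lambda>n. (n+1) mod N) {..<N} {..<N}"
    by (rule bij_betw_byWitness[where f'="\<lambda>n::nat. (n+N-1) mod N"])
       (use assms prv_nxt nxt_prv in auto)
  thus ?thesis by (rule sum.reindex_bij_betw)
qed

lemma sum_delta_mult:
  fixes c :: complex and a N :: nat
  assumes "a < N"
  shows "(\<Sum>m<N. (if m = a then c else 0) * f m) = c * f a"
proof -
  have "(\<Sum>m<N. (if m = a then c else 0) * f m) = (\<Sum>m<N. if m = a then c * f a else 0)"
    by (rule sum.cong) auto
  also have "\<dots> = c * f a" using assms by simp
  finally show ?thesis .
qed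

theorem theorem3p2:
  fixes N :: nat and \<alpha> \<beta> \<gamma> T :: real
  assumes "N > 2" and "\<alpha> \<ge> 0" and "\<beta> \<ge> 0" and "\<gamma> > 0" and "T > 0"
    and "diagonalisable (map_mat complex_of_real (drift_matrix N \<alpha> \<beta> \<gamma> T))"
    and "card {z. eigenvalue (map_mat complex_of_real (drift_matrix N \<alpha> \<beta> \<gamma> T)) z} = 2 * N"
    and "\<gamma> / 2 + \<beta> + T * \<alpha> > 1 / T"
  shows "\<forall>z. eigenvalue (map_mat complex_of_real (drift_matrix N \<alpha> \<beta> \<gamma> T)) z \<longrightarrow> Re z \<le> 0"
proof (intro allI impI)
  fix z assume ev: "eigenvalue (map_mat complex_of_real (drift_matrix N \<alpha> \<beta> \<gamma> T)) z"
  define A where "A = map_mat complex_of_real (drift_matrix N \<alpha> \<beta> \<gamma> T)"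
  have N0: "0 < N" using assms(1) by simp
  have dimA: "dim_row A = 2*N" "dim_col A = 2*N" by (simp_all add: A_def drift_matrix_def)
  obtain w where w: "w \<in> carrier_vec (2*N)" "w \<noteq> 0\<^sub>v (2*N)" "A *\<^sub>v w = z \<cdot>\<^sub>v w"
    using ev unfolding eigenvalue_def eigenvector_def A_def[symmetric] dimA by auto
  have dimw: "dim_vec w = 2*N" using w(1) by simp
  define nx where "nx n = (n+1) mod N" for n
  define pv where "pv n = (n+N-1) mod N" for n
  define x where "x n = w $ (2*n)" for n
  define y where "y n = w $ (2*n+1)" for n
  have nxN: "nx n < N" for n using N0 unfolding nx_def by simp
  have pvN: "pv n < N" for n using N0 unfolding pv_def by simp
  have row: "(\<Sum>m<N. A$$(i,2*m) * x m + A$$(i,2*m+1) * y m) = z * w $ i" if i: "i < 2*N" for i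
  proof -
    have "(A *\<^sub>v w) $ i = z * w $ i" using w(3) i dimw by simp
    moreover have "(A *\<^sub>v w) $ i = (\<Sum>j\<in>{0..<2*N}. A$$(i,j) * w $ j)"
      using i dimA dimw by (simp add: scalar_prod_def)
    ultimately show ?thesis by (simp add: sum_even_odd x_def y_def)
  qed
  have e1: "A$$(2*n, 2*m) = 0" if "n < N" "m < N" for n m
    using that unfolding A_def drift_matrix_def by (simp; presburger)
  have e2: "A$$(2*n, 2*m+1) = (if m = n then 1 else 0)" if "n < N" "m < N" for n m
    using that unfolding A_def drift_matrix_def by (simp; presburger)
  have e3: "A$$(2*n+1, 2*m) = (if m = nx n then complex_of_real (\<gamma>/T+\<alpha>) else 0)
       + (if m = n then complex_of_real (-\<gamma>/T-2*\<alpha>) else 0) + (if m = pv n then complex_of_real \<alpha> else 0)"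
    if "n < N" "m < N" for n m
    using that unfolding A_def drift_matrix_def nx_def pv_def by (simp add: Let_def)
  have e4: "A$$(2*n+1, 2*m+1) = (if m = n then complex_of_real (-\<gamma>-\<beta>) else 0)
       + (if m = nx n then complex_of_real \<beta> else 0)"
    if "n < N" "m < N" for n m
    using that unfolding A_def drift_matrix_def nx_def pv_def by (simp add: Let_def)
  have yx: "y n = z * x n" if n: "n < N" for n
  proof -
    have "(\<Sum>m<N. A$$(2*n,2*m) * x m + A$$(2*n,2*m+1) * y m) = (\<Sum>m<N. (if m = n then 1 else 0) * y m)"
    proof (rule sum.cong)
      fix m assume "m \<in> {..<N}"
      hence m: "m < N" by simp
      show "A$$(2*n,2*m) * x m + A$$(2*n,2*m+1) * y m = (if m = n then 1 else 0) * y m"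
        using e1[OF n m] e2[OF n m] by simp
    qed simp
    also have "\<dots> = y n" using sum_delta_mult[OF n, of 1 y] by simp
    finally show ?thesis using row[of "2*n"] n by (simp add: x_def)
  qed
  have odd: "z * y n = complex_of_real (\<gamma>/T+\<alpha>) * x (nx n) + complex_of_real (-\<gamma>/T-2*\<alpha>) * x n
      + complex_of_real \<alpha> * x (pv n) + complex_of_real (-\<gamma>-\<beta>) * y n + complex_of_real \<beta> * y (nx n)"
    if n: "n < N" for n
  proof -
    have "(\<Sum>m<N. A$$(2*n+1,2*m) * x m + A$$(2*n+1,2*m+1) * y m) =
      (\<Sum>m<N. (if m = nx n then complex_of_real (\<gamma>/T+\<alpha>) else 0) * x m)
      + (\<Sum>m<N. (if m = n then complex_of_real (-\<gamma>/T-2*\<alpha>) else 0) * x m)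
      + (\<Sum>m<N. (if m = pv n then complex_of_real \<alpha> else 0) * x m)
      + (\<Sum>m<N. (if m = n then complex_of_real (-\<gamma>-\<beta>) else 0) * y m)
      + (\<Sum>m<N. (if m = nx n then complex_of_real \<beta> else 0) * y m)"
    proof -
      have "\<And>m. m \<in> {..<N} \<Longrightarrow> A$$(2*n+1,2*m) * x m + A$$(2*n+1,2*m+1) * y m =
        (if m = nx n then complex_of_real (\<gamma>/T+\<alpha>) else 0) * x m
      + (if m = n then complex_of_real (-\<gamma>/T-2*\<alpha>) else 0) * x m
      + (if m = pv n then complex_of_real \<alpha> else 0) * x m
      + (if m = n then complex_of_real (-\<gamma>-\<beta>) else 0) * y m
      + (if m = nx n then complex_of_real \<beta> else 0) * y m"
      proof -
        fix m assume "m \<in> {..<N}"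
        hence m: "m < N" by simp
        show "?thesis m" unfolding e3[OF n m] e4[OF n m] by (simp only: distrib_right add.assoc)
      qed
      hence "(\<Sum>m<N. A$$(2*n+1,2*m) * x m + A$$(2*n+1,2*m+1) * y m) = (\<Sum>m<N. 
        (if m = nx n then complex_of_real (\<gamma>/T+\<alpha>) else 0) * x m
      + (if m = n then complex_of_real (-\<gamma>/T-2*\<alpha>) else 0) * x m
      + (if m = pv n then complex_of_real \<alpha> else 0) * x m
      + (if m = n then complex_of_real (-\<gamma>-\<beta>) else 0) * y m
      + (if m = nx n then complex_of_real \<beta> else 0) * y m)" by (rule sum.cong[OF refl])
      thus ?thesis by (simp only: sum.distrib)
    qed
    also have "\<dots> = complex_of_real (\<gamma>/T+\<alpha>) * x (nx n) + complex_of_real (-\<gamma>/T-2*\<alpha>) * x n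
      + complex_of_real \<alpha> * x (pv n) + complex_of_real (-\<gamma>-\<beta>) * y n + complex_of_real \<beta> * y (nx n)"
      by (simp only: sum_delta_mult[OF nxN] sum_delta_mult[OF pvN] sum_delta_mult[OF n])
    finally show ?thesis using row[of "2*n+1"] n by (simp add: y_def)
  qed
  define K where "K = \<gamma>/T"
  have key: "z*z*x n = complex_of_real K * (x (nx n) - x n) + complex_of_real \<alpha> * (x (nx n) - 2 * x n + x (pv n))
     - complex_of_real \<gamma> * z * x n + complex_of_real \<beta> * z * (x (nx n) - x n)" if n: "n < N" for n
  proof -
    have "z * (z * x n) = complex_of_real (\<gamma>/T+\<alpha>) * x (nx n) + complex_of_real (-\<gamma>/T-2*\<alpha>) * x n
      + complex_of_real \<alpha> * x (pv n) + complex_of_real (-\<gamma>-\<beta>) * (z * x n) + complex_of_real \<beta> * (z * x (nx n))"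
      using odd[OF n] yx[OF n] yx[OF nxN] by simp
    thus ?thesis unfolding K_def by (simp add: algebra_simps)
  qed
  have xnz: "\<exists>n<N. x n \<noteq> 0"
  proof (rule ccontr)
    assume "\<not> (\<exists>n<N. x n \<noteq> 0)"
    hence x0: "\<And>n. n < N \<Longrightarrow> x n = 0" by auto
    have "w = 0\<^sub>v (2*N)"
    proof (rule eq_vecI)
      fix j assume "j < dim_vec (0\<^sub>v (2*N) :: complex vec)"
      hence j: "j < 2*N" by simp
      hence jN: "j div 2 < N" by simp
      show "w $ j = 0\<^sub>v (2*N) $ j"
      proof (cases "even j")
        case True
        hence "w $ j = x (j div 2)" unfolding x_def by simp
        thus ?thesis using x0[OF jN] j by simp
      next
        case False
        hence "j = 2*(j div 2)+1" by simp
        hence "w $ j = y (j div 2)" unfolding y_def by metis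
        thus ?thesis using x0[OF jN] yx[OF jN] j by simp
      qed
    qed (simp add: dimw)
    thus False using w(2) by simp
  qed
  define S where "S = (\<Sum>n<N. x n * cnj (x n))"
  define Sr where "Sr = (\<Sum>n<N. (cmod (x n))\<^sup>2)"
  define dl where "dl n = x (nx n) - x n" for n
  define E where "E = (\<Sum>n<N. dl n * cnj (dl n))"
  define Er where "Er = (\<Sum>n<N. (cmod (dl n))\<^sup>2)"
  define D where "D = (\<Sum>n<N. dl n * cnj (x n))"
  define P where "P = (\<Sum>n<N. x (nx n) * cnj (x n))"
  define Q where "Q = (\<Sum>n<N. x n * cnj (x (nx n)))"
  have S_Sr: "S = complex_of_real Sr" unfolding S_def Sr_def by (simp only: of_real_sum complex_norm_square)
  have E_Er: "E = complex_of_real Er" unfolding E_def Er_def by (simp only: of_real_sum complex_norm_square)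
  have Sr0: "Sr > 0"
  proof -
    obtain n0 where n0: "n0 < N" "x n0 \<noteq> 0" using xnz by blast
    show ?thesis unfolding Sr_def by (rule sum_pos2[of _ n0]) (use n0 in auto)
  qed
  have Er0: "Er \<ge> 0" unfolding Er_def by (simp add: sum_nonneg)
  have shift1: "(\<Sum>n<N. x (nx n) * cnj (x (nx n))) = S"
    unfolding S_def nx_def by (rule sum_shift[OF N0, of "\<lambda>m. x m * cnj (x m)"])
  have shift2: "(\<Sum>n<N. x (pv n) * cnj (x n)) = Q"
  proof -
    have "(\<Sum>n<N. x (pv n) * cnj (x n)) = (\<Sum>n<N. x (pv (nx n)) * cnj (x (nx n)))"
      unfolding nx_def by (rule sum_shift[OF N0, of "\<lambda>m. x (pv m) * cnj (x m)", symmetric])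
    also have "\<dots> = Q" unfolding Q_def
    proof (rule sum.cong[OF refl])
      fix n assume "n \<in> {..<N}"
      hence "pv (nx n) = n" unfolding pv_def nx_def by (intro prv_nxt) simp
      thus "x (pv (nx n)) * cnj (x (nx n)) = x n * cnj (x (nx n))" by simp
    qed
    finally show ?thesis .
  qed
  have QP: "Q = cnj P" unfolding P_def Q_def by (simp add: mult.commute)
  have D_P: "D = P - S" unfolding D_def P_def S_def dl_def by (simp add: algebra_simps sum_subtractf)
  have E_PQ: "E = S - P - Q + S"
  proof -
    have "E = (\<Sum>n<N. x (nx n) * cnj (x (nx n)) - x (nx n) * cnj (x n) - x n * cnj (x (nx n)) + x n * cnj (x n))"
      unfolding E_def dl_def by (rule sum.cong[OF refl]) (simp add: algebra_simps)
    also have "\<dots> = S - P - Q + S" using shift1 unfolding P_def Q_def S_def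
      by (simp add: sum.distrib sum_subtractf)
    finally show ?thesis .
  qed
  have main: "z*z*S = complex_of_real K * D + complex_of_real \<alpha> * (P - 2*S + Q)
      - complex_of_real \<gamma> * z * S + complex_of_real \<beta> * z * D"
  proof -
    have "(\<Sum>n<N. z*z*x n * cnj (x n)) = (\<Sum>n<N. complex_of_real K * (dl n * cnj (x n))
       + complex_of_real \<alpha> * (x (nx n) * cnj (x n) - 2 * (x n * cnj (x n)) + x (pv n) * cnj (x n))
       - complex_of_real \<gamma> * z * (x n * cnj (x n)) + complex_of_real \<beta> * z * (dl n * cnj (x n)))"
    proof (rule sum.cong[OF refl])
      fix n assume "n \<in> {..<N}"
      hence n: "n < N" by simp
      show "z*z*x n * cnj (x n) = complex_of_real K * (dl n * cnj (x n))
       + complex_of_real \<alpha> * (x (nx n) * cnj (x n) - 2 * (x n * cnj (x n)) + x (pv n) * cnj (x n))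
       - complex_of_real \<gamma> * z * (x n * cnj (x n)) + complex_of_real \<beta> * z * (dl n * cnj (x n))"
      proof -
        have "z*z*x n * cnj (x n) = (complex_of_real K * (x (nx n) - x n) + complex_of_real \<alpha> * (x (nx n) - 2 * x n + x (pv n))
          - complex_of_real \<gamma> * z * x n + complex_of_real \<beta> * z * (x (nx n) - x n)) * cnj (x n)"
          using key[OF n] by simp
        thus ?thesis unfolding dl_def by (simp add: algebra_simps)
      qed
    qed
    also have "\<dots> = complex_of_real K * D + complex_of_real \<alpha> * (P - 2*S + Q)
      - complex_of_real \<gamma> * z * S + complex_of_real \<beta> * z * D"
      unfolding D_def P_def S_def shift2[symmetric]
      by (simp add: sum.distrib sum_subtractf sum_distrib_left distrib_left right_diff_distrib)
    finally show ?thesis unfolding S_def by (simp add: sum_distrib_left mult.assoc)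
  qed
  have ReD: "Re D = - Er / 2"
  proof -
    have "Re E = Er" using E_Er by simp
    moreover have "Re E = 2 * Re S - 2 * Re P" using E_PQ QP by simp
    moreover have "Re D = Re P - Re S" using D_P by simp
    ultimately show ?thesis by simp
  qed
  have CS: "(cmod D)\<^sup>2 \<le> Er * Sr"
  proof -
    have "cmod D \<le> (\<Sum>n<N. cmod (dl n) * cmod (x n))"
      unfolding D_def using norm_sum[of "\<lambda>n. dl n * cnj (x n)" "{..<N}"] by (simp add: norm_mult)
    hence "(cmod D)\<^sup>2 \<le> (\<Sum>n<N. cmod (dl n) * cmod (x n))\<^sup>2"
      by (intro power_mono) simp_all
    also have "\<dots> \<le> Er * Sr" unfolding Er_def Sr_def by (rule Cauchy_Schwarz_ineq_sum)
    finally show ?thesis .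
  qed
  define d where "d = D / complex_of_real Sr"
  define e where "e = Er / (2*Sr)"
  define b where "b = Im d"
  have Red: "Re d = - e" unfolding d_def e_def using ReD by (simp add: Re_divide_of_real)
  have Imd: "b = Im D / Sr" unfolding b_def d_def by (simp add: Im_divide_of_real)
  have disk: "e\<^sup>2 + b\<^sup>2 \<le> 2*e"
  proof -
    have "e\<^sup>2 + b\<^sup>2 = (cmod D)\<^sup>2 / Sr\<^sup>2" unfolding cmod_power2 Imd e_def using ReD
      by (simp add: power_divide add_divide_distrib)
    also have "\<dots> \<le> (Er * Sr) / Sr\<^sup>2" using CS Sr0 by (simp add: divide_right_mono)
    also have "\<dots> = 2*e" unfolding e_def using Sr0 by (simp add: power2_eq_square)
    finally show ?thesis .
  qed
  have Snz: "S \<noteq> 0" using S_Sr Sr0 by simp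
  have dS: "d * S = D" unfolding d_def S_Sr using Sr0 by simp
  have eS: "complex_of_real (2*e) * S = E" unfolding e_def S_Sr E_Er using Sr0 by simp
  have eqd: "z*z + complex_of_real \<gamma> * z = (complex_of_real K + complex_of_real \<beta> * z) * d - complex_of_real (2*\<alpha>*e)"
  proof -
    have "(z*z + complex_of_real \<gamma> * z) * S = ((complex_of_real K + complex_of_real \<beta> * z) * d - complex_of_real (2*\<alpha>*e)) * S"
    proof -
      have "P - 2*S + Q = - E" using E_PQ by simp
      hence "z*z*S = complex_of_real K * D - complex_of_real \<alpha> * E
        - complex_of_real \<gamma> * z * S + complex_of_real \<beta> * z * D" using main by simp
      thus ?thesis unfolding dS[symmetric] eS[symmetric] by (simp add: algebra_simps)
    qed
    thus ?thesis using Snz by simp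
  qed
  define u where "u = Re z"
  define v where "v = Im z"
  have R: "u\<^sup>2 - v\<^sup>2 + \<gamma>*u + K*e + \<beta>*u*e + \<beta>*b*v + 2*\<alpha>*e = 0"
  proof -
    have "Re (z*z + complex_of_real \<gamma> * z) = Re ((complex_of_real K + complex_of_real \<beta> * z) * d - complex_of_real (2*\<alpha>*e))"
      using eqd by simp
    thus ?thesis unfolding u_def v_def b_def using Red by (simp add: power2_eq_square algebra_simps)
  qed
  have I: "v*(2*u+\<gamma>+\<beta>*e) = b*(K+\<beta>*u)"
  proof -
    have "Im (z*z + complex_of_real \<gamma> * z) = Im ((complex_of_real K + complex_of_real \<beta> * z) * d - complex_of_real (2*\<alpha>*e))"
      using eqd by simp
    thus ?thesis unfolding u_def v_def b_def using Red by (simp add: algebra_simps)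
  qed
  have K0: "K > 0" unfolding K_def using assms by simp
  have cond: "2*K*(K - \<beta>*\<gamma>) < \<gamma>\<^sup>2*(K+2*\<alpha>)"
  proof -
    have h: "2 < T*\<gamma> + 2*T*\<beta> + 2*T*T*\<alpha>" using assms(8) assms(5) by (simp add: field_simps)
    have pos: "T*\<gamma>\<^sup>2 > 0" using assms by simp
    have h2: "2*(T*\<gamma>\<^sup>2) < (T*\<gamma> + 2*T*\<beta> + 2*T*T*\<alpha>)*(T*\<gamma>\<^sup>2)"
      by (rule mult_strict_right_mono[OF h pos])
    show ?thesis using h2 assms(5) unfolding K_def by (simp add: field_simps power2_eq_square)
  qed
  have "u \<le> 0" by (rule real_core[OF assms(4) K0 assms(2) assms(3) cond disk R I])
  thus "Re z \<le> 0" unfolding u_def .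
qed

end
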